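(* Let $X$ be a Peano continuum with metric $d$, let $x\in X$, and let $(f_n)_{n\in\mathbb{N}}$ (with $\mathbb{N}=\{0,1,2,\dots\}$) be continuous loops $f_n\colon[0,1]\to X$ with $f_n(0)=f_n(1)=x$, such that $\operatorname{diam} f_n([0,1])\le 2^{-n}$ and no $f_n$ is nulhomologous (i.e. each $f_n$ represents a nonzero element of $H_1(X)$). Let $f_n^1=f_n$ and let $f_n^0$ be the constant loop at $x$. For $\alpha\in\{0,1\}^{\mathbb{N}}$ define the infinite concatenation $f^\alpha=f_0^{\alpha(0)}\ast f_1^{\alpha(1)}\ast f_2^{\alpha(2)}\ast\cdots\colon[0,1]\to X$ by $f^\alpha(t)=f_n^{\alpha(n)}\big(2^{n+1}(t-(1-2^{-n}))\big)$ for $t\in[1-2^{-n},1-2^{-n-1}]$ and $f^\alpha(1)=x$ (this is a continuous loop at $x$). Define a relation $\sim$ on the Cantor set $\{0,1\}^{\mathbb{N}}$ by $\alpha\sim\beta$ iff $f^\alpha$ and $f^\beta$ are homologous (represent the same element of $H_1(X)$). Then $\sim$ is an analytic equivalence relation on $\{0,1\}^{\mathbb{N}}$ (i.e. an analytic subset of $\{0,1\}^{\mathbb{N}}\times\{0,1\}^{\mathbb{N}}$ which is an equivalence relation), and if $\alpha,\beta\in\{0,1\}^{\mathbb{N}}$ differ at exactly one coordinate then $\alpha\not\sim\beta$.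
   Context: A Peano continuum is a connected, locally connected compact metric space. The Cantor set $\{0,1\}^{\mathbb{N}}$ carries the product topology with $\{0,1\}$ discrete. A space is Polish if it is separable and completely metrizable. If $Y$ is Polish, a set $A\subseteq Y$ is analytic if there is a Polish space $Z$ and a closed set $D\subseteq Y\times Z$ such that $A$ is the projection of $D$ to $Y$. *)

theory Defs
  imports "HOL-Analysis.Analysis"
begin

text \<open>A singular 1-simplex in X is a path, i.e. a continuous map [0,1] to X; two such maps
are the same simplex iff they agree on [0,1].\<close>

definition same_on01 :: "(real \<Rightarrow> 'a) \<Rightarrow> (real \<Rightarrow> 'a) \<Rightarrow> bool" where
  "same_on01 p q \<longleftrightarrow> (\<forall>t\<in>{0..1}. p t = q t)"

text \<open>Coefficient of the 1-simplex tau in the elementary chain p.\<close>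
definition coef1 :: "(real \<Rightarrow> 'a) \<Rightarrow> (real \<Rightarrow> 'a) \<Rightarrow> int" where
  "coef1 p tau = (if same_on01 p tau then 1 else 0)"

definition simplex2 :: "(real \<times> real) set" where
  "simplex2 = {(a, b). 0 \<le> a \<and> 0 \<le> b \<and> a + b \<le> 1}"

definition face0 :: "(real \<times> real \<Rightarrow> 'a) \<Rightarrow> real \<Rightarrow> 'a" where
  "face0 \<sigma> t = \<sigma> (1 - t, t)"
definition face1 :: "(real \<times> real \<Rightarrow> 'a) \<Rightarrow> real \<Rightarrow> 'a" where
  "face1 \<sigma> t = \<sigma> (0, t)"
definition face2 :: "(real \<times> real \<Rightarrow> 'a) \<Rightarrow> real \<Rightarrow> 'a" where
  "face2 \<sigma> t = \<sigma> (t, 0)"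

definition bd2_coef :: "(real \<times> real \<Rightarrow> 'a) \<Rightarrow> (real \<Rightarrow> 'a) \<Rightarrow> int" where
  "bd2_coef \<sigma> tau = coef1 (face0 \<sigma>) tau - coef1 (face1 \<sigma>) tau + coef1 (face2 \<sigma>) tau"

text \<open>A 1-chain (given by its coefficient function) is a boundary in X if it is the boundary
of a finite integer combination of singular 2-simplices in X.\<close>
definition is_boundary1 :: "'a::topological_space set \<Rightarrow> ((real \<Rightarrow> 'a) \<Rightarrow> int) \<Rightarrow> bool" where
  "is_boundary1 X c \<longleftrightarrow>
     (\<exists>S :: ((real \<times> real \<Rightarrow> 'a) \<times> int) list.
        (\<forall>(\<sigma>, k) \<in> set S. continuous_on simplex2 \<sigma> \<and> \<sigma> ` simplex2 \<subseteq> X) \<and>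
        (\<forall>tau. c tau = (\<Sum>(\<sigma>, k) \<leftarrow> S. k * bd2_coef \<sigma> tau)))"

definition homologous :: "'a::topological_space set \<Rightarrow> (real \<Rightarrow> 'a) \<Rightarrow> (real \<Rightarrow> 'a) \<Rightarrow> bool" where
  "homologous X f g \<longleftrightarrow> is_boundary1 X (\<lambda>tau. coef1 f tau - coef1 g tau)"

definition nulhomologous :: "'a::topological_space set \<Rightarrow> (real \<Rightarrow> 'a) \<Rightarrow> bool" where
  "nulhomologous X f \<longleftrightarrow> is_boundary1 X (coef1 f)"

definition inf_concat :: "'a \<Rightarrow> (nat \<Rightarrow> real \<Rightarrow> 'a) \<Rightarrow> (nat \<Rightarrow> bool) \<Rightarrow> real \<Rightarrow> 'a" where
  "inf_concat x f \<alpha> t =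
     (if t = 1 then x
      else (SOME v. \<exists>n. 1 - (1/2)^n \<le> t \<and> t \<le> 1 - (1/2)^(Suc n) \<and>
              v = (if \<alpha> n then f n else (\<lambda>_. x)) (2^(Suc n) * (t - (1 - (1/2)^n)))))"

definition cantor_top :: "(nat \<Rightarrow> bool) topology" where
  "cantor_top = product_topology (\<lambda>_. discrete_topology UNIV) UNIV"

definition Polish_space :: "'a topology \<Rightarrow> bool" where
  "Polish_space Z \<longleftrightarrow> separable_space Z \<and> completely_metrizable_space Z"

text \<open>Analytic subsets of a Polish space Y. The witnessing Polish space Z is taken with
carrier type nat => real (every Polish space is homeomorphic to a closed subspace of R^N).\<close>
definition analytic_in :: "'a topology \<Rightarrow> 'a set \<Rightarrow> bool" where
  "analytic_in Y A \<longleftrightarrow>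
     (\<exists>(Z :: (nat \<Rightarrow> real) topology) D. Polish_space Z \<and> closedin (prod_topology Y Z) D \<and>
        A = fst ` D)"

end

theory Submission
  imports Defs
begin

lemma coef1_cong: "same_on01 p p' \<Longrightarrow> coef1 p tau = coef1 p' tau"
  unfolding coef1_def same_on01_def by auto

lemma bdry_zero: "is_boundary1 X (\<lambda>tau. 0)"
  unfolding is_boundary1_def by (rule exI[of _ "[]"]) simp

lemma bdry_add:
  assumes "is_boundary1 X c1" "is_boundary1 X c2"
  shows "is_boundary1 X (\<lambda>tau. c1 tau + c2 tau)"
proof -
  obtain S1 where S1: "\<forall>(\<sigma>, k) \<in> set S1. continuous_on simplex2 \<sigma> \<and> \<sigma> ` simplex2 \<subseteq> X"
     "\<forall>tau. c1 tau = (\<Sum>(\<sigma>, k) \<leftarrow> S1. k * bd2_coef \<sigma> tau)"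
    using assms(1) unfolding is_boundary1_def by blast
  obtain S2 where S2: "\<forall>(\<sigma>, k) \<in> set S2. continuous_on simplex2 \<sigma> \<and> \<sigma> ` simplex2 \<subseteq> X"
     "\<forall>tau. c2 tau = (\<Sum>(\<sigma>, k) \<leftarrow> S2. k * bd2_coef \<sigma> tau)"
    using assms(2) unfolding is_boundary1_def by blast
  show ?thesis unfolding is_boundary1_def
    by (rule exI[of _ "S1 @ S2"]) (use S1 S2 in \<open>simp add: ball_Un\<close>)
qed

lemma bdry_neg:
  assumes "is_boundary1 X c"
  shows "is_boundary1 X (\<lambda>tau. - c tau)"
proof -
  obtain S where S: "\<forall>(\<sigma>, k) \<in> set S. continuous_on simplex2 \<sigma> \<and> \<sigma> ` simplex2 \<subseteq> X"
     "\<forall>tau. c tau = (\<Sum>(\<sigma>, k) \<leftarrow> S. k * bd2_coef \<sigma> tau)"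
    using assms(1) unfolding is_boundary1_def by blast
  have "(\<Sum>(\<sigma>, k) \<leftarrow> map (\<lambda>(\<sigma>,k). (\<sigma>, -k)) S. k * bd2_coef \<sigma> tau) = - (\<Sum>(\<sigma>, k) \<leftarrow> S. k * bd2_coef \<sigma> tau)" for tau
    by (induction S) auto
  then show ?thesis unfolding is_boundary1_def
    by (intro exI[of _ "map (\<lambda>(\<sigma>,k). (\<sigma>, -k)) S"]) (use S in \<open>force simp: case_prod_beta\<close>)
qed

lemma bdry_ext: "is_boundary1 X c \<Longrightarrow> (\<And>tau. c tau = c' tau) \<Longrightarrow> is_boundary1 X c'"
  by (metis ext)

lemma bdry_diff:
  assumes "is_boundary1 X c1" "is_boundary1 X c2"
  shows "is_boundary1 X (\<lambda>tau. c1 tau - c2 tau)"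
  using bdry_add[OF assms(1) bdry_neg[OF assms(2)]] by simp

lemma equiv_part: "equiv UNIV {(\<alpha>, \<beta>). homologous X (g \<alpha>) (g \<beta>)}"
proof (rule equivI)
  show "refl {(\<alpha>, \<beta>). homologous X (g \<alpha>) (g \<beta>)}"
    unfolding refl_on_def homologous_def using bdry_zero by auto
  show "{(\<alpha>, \<beta>). homologous X (g \<alpha>) (g \<beta>)} \<subseteq> UNIV \<times> UNIV" by auto
  show "sym {(\<alpha>, \<beta>). homologous X (g \<alpha>) (g \<beta>)}"
    unfolding sym_def homologous_def using bdry_neg by fastforce
  show "trans {(\<alpha>, \<beta>). homologous X (g \<alpha>) (g \<beta>)}"
    unfolding trans_def homologous_def using bdry_add by fastforce
qed

lemma const_bdry:
  assumes "x \<in> X"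
  shows "is_boundary1 X (coef1 (\<lambda>_. x))"
proof -
  have "coef1 (\<lambda>_. x) tau = (\<Sum>(\<sigma>, k) \<leftarrow> [((\<lambda>_. x)::real\<times>real\<Rightarrow>_, 1::int)]. k * bd2_coef \<sigma> tau)" for tau
  proof -
    have "face0 (\<lambda>_. x) = (\<lambda>_::real. x)" "face1 (\<lambda>_. x) = (\<lambda>_::real. x)" "face2 (\<lambda>_. x) = (\<lambda>_::real. x)"
      by (auto simp: face0_def face1_def face2_def)
    then show ?thesis by (simp add: bd2_coef_def)
  qed
  then show ?thesis unfolding is_boundary1_def
    by (intro exI[of _ "[((\<lambda>_. x)::real\<times>real\<Rightarrow>_, 1::int)]"]) (use assms in auto)
qed

lemma split_bdry:
  assumes "continuous_on {0..1} p" "p ` {0..1} \<subseteq> X" "0 \<le> s" "s \<le> 1"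
  shows "is_boundary1 X (\<lambda>tau. coef1 p tau - coef1 (\<lambda>t. p (s*t)) tau - coef1 (\<lambda>t. p (s + (1-s)*t)) tau)"
proof -
  define \<sigma> where "\<sigma> = (\<lambda>(u::real,v::real). p (s*u+v))"
  have rng: "s*u+v \<in> {0..1}" if "(u,v) \<in> simplex2" for u v
  proof -
    have "s*u \<le> u" using that assms by (simp add: simplex2_def mult_left_le_one_le)
    then show ?thesis using that assms by (auto simp: simplex2_def)
  qed
  have cont: "continuous_on simplex2 \<sigma>"
    unfolding \<sigma>_def split_def
    by (rule continuous_on_compose2[OF assms(1)]) (auto intro!: continuous_intros rng)
  have img: "\<sigma> ` simplex2 \<subseteq> X"
    using rng assms(2) by (auto simp: \<sigma>_def)
  have f0: "face0 \<sigma> = (\<lambda>t. p (s + (1-s)*t))"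
    by (auto simp: face0_def \<sigma>_def algebra_simps)
  have f1: "face1 \<sigma> = p" by (auto simp: face1_def \<sigma>_def)
  have f2: "face2 \<sigma> = (\<lambda>t. p (s*t))" by (auto simp: face2_def \<sigma>_def)
  have "coef1 p tau - coef1 (\<lambda>t. p (s*t)) tau - coef1 (\<lambda>t. p (s + (1-s)*t)) tau
        = (\<Sum>(\<sigma>, k) \<leftarrow> [(\<sigma>, -1::int)]. k * bd2_coef \<sigma> tau)" for tau
    by (simp add: bd2_coef_def f0 f1 f2)
  then show ?thesis unfolding is_boundary1_def
    by (intro exI[of _ "[(\<sigma>, -1::int)]"]) (use cont img in auto)
qed


definition aa :: "nat \<Rightarrow> real" where "aa n = 1 - (1/2)^n"
definition gg :: "'a \<Rightarrow> (nat \<Rightarrow> real \<Rightarrow> 'a) \<Rightarrow> (nat \<Rightarrow> bool) \<Rightarrow> nat \<Rightarrow> real \<Rightarrow> 'a" where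
  "gg x f \<alpha> n = (if \<alpha> n then f n else (\<lambda>_. x))"

lemma aa_le_iff: "aa n \<le> aa m \<longleftrightarrow> n \<le> m"
  by (simp add: aa_def)

lemma aa_less_iff: "aa n < aa m \<longleftrightarrow> n < m"
  by (simp add: aa_def)

lemma aa_lt1: "aa n < 1" by (simp add: aa_def)
lemma aa_ge0: "0 \<le> aa n" by (simp add: aa_def power_le_one)

lemma aa_Suc_diff: "aa (Suc n) - aa n = (1/2)^Suc n"
  by (simp add: aa_def)

lemma aa_inj: "aa n = aa m \<Longrightarrow> n = m"
  by (metis aa_le_iff order_antisym order_refl)

lemma intervals_overlap:
  assumes "aa n \<le> t" "t \<le> aa (Suc n)" "aa m \<le> t" "t \<le> aa (Suc m)" "n < m"
  shows "m = Suc n \<and> t = aa m"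
proof -
  have "aa (Suc n) \<le> aa m" using assms(5) by (simp add: aa_le_iff)
  then have "t = aa m" "aa m = aa (Suc n)" using assms by linarith+
  then show ?thesis using aa_inj by metis
qed

lemma gg_0: "pathstart (f n) = x \<Longrightarrow> gg x f \<alpha> n 0 = x"
  by (simp add: gg_def pathstart_def)
lemma gg_1: "pathfinish (f n) = x \<Longrightarrow> gg x f \<alpha> n 1 = x"
  by (simp add: gg_def pathfinish_def)

lemma arg_endpoint: "2^(Suc n) * (aa (Suc n) - aa n) = (1::real)"
  by (simp add: aa_Suc_diff power_mult_distrib[symmetric])

lemma ic_eval:
  assumes ps: "\<And>n. pathstart (f n) = x" and pf: "\<And>n. pathfinish (f n) = x"
    and t: "aa n \<le> t" "t \<le> aa (Suc n)"
  shows "inf_concat x f \<alpha> t = gg x f \<alpha> n (2^(Suc n) * (t - aa n))"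
proof -
  have t1: "t \<noteq> 1" using t(2) aa_lt1[of "Suc n"] by auto
  have key: "v = gg x f \<alpha> n (2^(Suc n) * (t - aa n))"
    if "aa m \<le> t" "t \<le> aa (Suc m)" "v = gg x f \<alpha> m (2^(Suc m) * (t - aa m))" for m v
  proof (cases "m = n")
    case True then show ?thesis using that by simp
  next
    case False
    then consider "n < m" | "m < n" by linarith
    then show ?thesis
    proof cases
      case 1
      with intervals_overlap[OF t that(1,2)] have "m = Suc n" "t = aa m" by auto
      then show ?thesis using that(3) arg_endpoint[of n] gg_0[OF ps] gg_1[OF pf] by simp
    next
      case 2
      with intervals_overlap[OF that(1,2) t] have "n = Suc m" "t = aa n" by auto
      then show ?thesis using that(3) arg_endpoint[of m] gg_0[OF ps] gg_1[OF pf] by simp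
    qed
  qed
  have eq: "inf_concat x f \<alpha> t = (SOME v. \<exists>m. aa m \<le> t \<and> t \<le> aa (Suc m) \<and> v = gg x f \<alpha> m (2^(Suc m) * (t - aa m)))"
    unfolding inf_concat_def aa_def gg_def using t1 by simp
  show ?thesis
    unfolding eq
    apply (rule someI2[where a = "gg x f \<alpha> n (2^(Suc n) * (t - aa n))"])
    using t apply blast
    using key by blast
qed

lemma locate:
  assumes "0 \<le> t" "t < 1"
  obtains n where "aa n \<le> t" "t < aa (Suc n)"
proof -
  obtain k where k: "(1/2::real)^k < 1 - t"
    using real_arch_pow_inv[of "1-t" "1/2"] assms by auto
  then have ex: "\<exists>k. t < aa k" unfolding aa_def by (intro exI[of _ k]) linarith
  define n where "n = (LEAST k. t < aa k)"
  have n: "t < aa n" unfolding n_def by (rule LeastI_ex[OF ex])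
  have "n \<noteq> 0" using n assms by (auto simp: aa_def intro!: Nat.gr0I)
  then obtain m where m: "n = Suc m" using not0_implies_Suc by blast
  have "\<not> t < aa m" using m n_def not_less_Least by (metis lessI)
  then show ?thesis using that[of m] n m by auto
qed


lemma arg_range:
  assumes "aa n \<le> t" "t \<le> aa (Suc n)"
  shows "2^(Suc n) * (t - aa n) \<in> {0..(1::real)}"
proof -
  have "2^(Suc n) * (t - aa n) \<le> 2^(Suc n) * (aa (Suc n) - aa n)"
    using assms by (intro mult_left_mono) auto
  moreover have "0 \<le> 2^(Suc n) * (t - aa n)" using assms by simp
  ultimately show ?thesis unfolding atLeastAtMost_iff using arg_endpoint[of n] by linarith
qed

locale icloc =
  fixes X :: "'a::metric_space set" and x :: 'a and f :: "nat \<Rightarrow> real \<Rightarrow> 'a"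
  assumes xX: "x \<in> X"
    and pth: "\<And>n. path (f n)" and img: "\<And>n. path_image (f n) \<subseteq> X"
    and ps: "\<And>n. pathstart (f n) = x" and pf: "\<And>n. pathfinish (f n) = x"
    and diam: "\<And>n. diameter (path_image (f n)) \<le> (1/2)^n"
begin

lemma ic1: "inf_concat x f \<alpha> 1 = x"
  by (simp add: inf_concat_def)

lemma gg_img: "s \<in> {0..1} \<Longrightarrow> gg x f \<alpha> n s \<in> X"
  using img[of n] xX by (auto simp: gg_def path_image_def)

lemma ic_img: "t \<in> {0..1} \<Longrightarrow> inf_concat x f \<alpha> t \<in> X"
proof (cases "t = 1")
  case True then show ?thesis using ic1 xX by simp
next
  case False
  assume t: "t \<in> {0..1}"
  then obtain n where n: "aa n \<le> t" "t < aa (Suc n)" using locate[of t] False by auto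
  show ?thesis using ic_eval[OF ps pf n(1)] n arg_range[of n t] gg_img by auto
qed

lemma gg_near: "s \<in> {0..1} \<Longrightarrow> dist (gg x f \<alpha> n s) x \<le> (1/2)^n"
proof -
  assume s: "s \<in> {0..1}"
  show ?thesis
  proof (cases "\<alpha> n")
    case True
    have "dist (f n s) (f n 0) \<le> diameter (path_image (f n))"
      by (rule diameter_bounded_bound) (use s bounded_path_image[OF pth] in \<open>auto simp: path_image_def\<close>)
    then show ?thesis using True diam[of n] ps[of n] by (simp add: gg_def pathstart_def)
  next
    case False then show ?thesis by (simp add: gg_def)
  qed
qed

lemma ic_near1:
  assumes "aa n \<le> t" "t \<le> 1"
  shows "dist (inf_concat x f \<alpha> t) x \<le> (1/2)^n"
proof (cases "t = 1")
  case True then show ?thesis by (simp add: ic1)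
next
  case False
  have "0 \<le> t" using assms aa_ge0[of n] by linarith
  then obtain m where m: "aa m \<le> t" "t < aa (Suc m)" using locate[of t] False assms by auto
  have "aa n < aa (Suc m)" using m assms by linarith
  then have nm: "n \<le> m" by (simp add: aa_less_iff)
  have "dist (inf_concat x f \<alpha> t) x \<le> (1/2)^m"
    using ic_eval[OF ps pf m(1)] m arg_range[of m t] gg_near by auto
  also have "\<dots> \<le> (1/2)^n" using nm by (simp add: power_decreasing)
  finally show ?thesis .
qed

lemma gg_cont: "continuous_on {0..1} (gg x f \<alpha> n)"
  using pth[of n] by (auto simp: gg_def path_def)

lemma ic_cont_aa: "continuous_on {0..aa N} (inf_concat x f \<alpha>)"
proof (induction N)
  case 0 then show ?case by (simp add: aa_def)
next
  case (Suc N)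
  have "continuous_on {aa N..aa (Suc N)} (\<lambda>t. gg x f \<alpha> N (2^(Suc N) * (t - aa N)))"
    by (rule continuous_on_compose2[OF gg_cont]) (use arg_range[of N] in \<open>auto intro!: continuous_intros\<close>)
  then have c2: "continuous_on {aa N..aa (Suc N)} (inf_concat x f \<alpha>)"
    by (rule continuous_on_eq) (auto simp: ic_eval[OF ps pf])
  have "{0..aa (Suc N)} = {0..aa N} \<union> {aa N..aa (Suc N)}"
    using aa_ge0[of N] aa_le_iff[of N "Suc N"] by auto
  then show ?case using continuous_on_closed_Un[OF _ _ Suc c2] by simp
qed

lemma ic_cont: "continuous_on {0..1} (inf_concat x f \<alpha>)"
  unfolding continuous_on_eq_continuous_within
proof
  fix t :: real assume t: "t \<in> {0..1}"
  show "continuous (at t within {0..1}) (inf_concat x f \<alpha>)"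
  proof (cases "t = 1")
    case True
    show ?thesis unfolding continuous_within_eps_delta
    proof (intro allI impI)
      fix e :: real assume e: "0 < e"
      obtain n where n: "(1/2::real)^n < e"
        using real_arch_pow_inv[of e "1/2"] e by auto
      show "\<exists>d>0. \<forall>x'\<in>{0..1}. dist x' t < d \<longrightarrow> dist (inf_concat x f \<alpha> x') (inf_concat x f \<alpha> t) < e"
      proof (intro exI[of _ "(1/2)^n"] conjI ballI impI)
        fix s :: real assume s: "s \<in> {0..1}" "dist s t < (1/2)^n"
        then have "aa n \<le> s" using True by (auto simp: aa_def dist_real_def)
        then have "dist (inf_concat x f \<alpha> s) x \<le> (1/2)^n" by (rule ic_near1) (use s in auto)
        then show "dist (inf_concat x f \<alpha> s) (inf_concat x f \<alpha> t) < e"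
          using n by (metis True ic1 order_le_less_trans)
      qed simp
    qed
  next
    case False
    then have "t < 1" using t by auto
    then obtain n where n: "aa n \<le> t" "t < aa (Suc n)" using locate[of t] t by auto
    have "continuous (at t within {0..aa (Suc n)}) (inf_concat x f \<alpha>)"
      using ic_cont_aa[of "Suc n"] t n by (simp add: continuous_on_eq_continuous_within)
    moreover have "at t within {0..1} = at t within {0..aa (Suc n)}"
      by (rule at_within_nhd[of _ "{..<aa (Suc n)}"]) (use n aa_lt1[of "Suc n"] in auto)
    ultimately show ?thesis by simp
  qed
qed

end

context icloc begin

lemma ic_eval':
  assumes "aa n \<le> t" "t \<le> aa (Suc n)"
  shows "inf_concat x f \<alpha> t = gg x f \<alpha> n (2^(Suc n) * (t - aa n))"
  by (rule ic_eval[where f=f and x=x]) (use ps pf assms in auto)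

lemma aa_compl: "1 - aa n = (1/2)^n" by (simp add: aa_def)

lemma decomp:
  fixes s1 :: real and \<gamma> :: "nat \<Rightarrow> bool"
  assumes s1: "0 \<le> s1" "s1 \<le> 1"
  shows "is_boundary1 X (\<lambda>tau. coef1 (inf_concat x f \<gamma>) tau
     - coef1 (\<lambda>t. inf_concat x f \<gamma> (s1*t)) tau
     - coef1 (\<lambda>t. inf_concat x f \<gamma> (s1 + (1-s1)*((1/2)*t))) tau
     - coef1 (\<lambda>t. inf_concat x f \<gamma> (s1 + (1-s1)*(1/2 + (1-1/2)*t))) tau)"
proof -
  have rng: "s1 + (1-s1)*t \<in> {0..1}" if "t \<in> {0..1}" for t
  proof -
    have "(1-s1)*t \<le> 1-s1" using that s1 by (simp add: mult_left_le)
    moreover have "0 \<le> (1-s1)*t" using that s1 by simp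
    ultimately show ?thesis using s1 by auto
  qed
  have b1: "is_boundary1 X (\<lambda>tau. coef1 (inf_concat x f \<gamma>) tau - coef1 (\<lambda>t. inf_concat x f \<gamma> (s1*t)) tau
        - coef1 (\<lambda>t. inf_concat x f \<gamma> (s1 + (1-s1)*t)) tau)"
    by (rule split_bdry[OF ic_cont _ s1]) (use ic_img in \<open>simp add: image_subset_iff\<close>)
  have qc: "continuous_on {0..1} (\<lambda>t. inf_concat x f \<gamma> (s1 + (1-s1)*t))"
    by (rule continuous_on_compose2[OF ic_cont]) (use rng in \<open>auto intro!: continuous_intros\<close>)
  have b2: "is_boundary1 X (\<lambda>tau. coef1 (\<lambda>t. inf_concat x f \<gamma> (s1 + (1-s1)*t)) tau
      - coef1 (\<lambda>t. inf_concat x f \<gamma> (s1 + (1-s1)*((1/2)*t))) tau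
      - coef1 (\<lambda>t. inf_concat x f \<gamma> (s1 + (1-s1)*(1/2 + (1-1/2)*t))) tau)"
  proof -
    have qi: "(\<lambda>t. inf_concat x f \<gamma> (s1 + (1-s1)*t)) ` {0..1} \<subseteq> X"
      using rng ic_img by (simp add: image_subset_iff)
    show ?thesis using split_bdry[OF qc qi, of "1/2"] by simp
  qed
  show ?thesis by (rule bdry_ext[OF bdry_add[OF b1 b2]]) linarith
qed

lemma agree_lo:
  fixes n0 :: nat and \<alpha> \<beta> :: "nat \<Rightarrow> bool" and t :: real
  assumes "\<And>n. n < n0 \<Longrightarrow> \<alpha> n = \<beta> n" "0 \<le> t" "t \<le> aa n0"
  shows "inf_concat x f \<alpha> t = inf_concat x f \<beta> t"
proof -
  have t1: "t < 1" using assms aa_lt1[of n0] by linarith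
  obtain m where m: "aa m \<le> t" "t < aa (Suc m)" using locate[OF assms(2) t1] by blast
  have "aa m \<le> aa n0" using m assms by linarith
  then have "m \<le> n0" by (simp add: aa_le_iff)
  then consider "m < n0" | "m = n0" by linarith
  then show ?thesis
  proof cases
    case 1
    then show ?thesis using ic_eval[OF ps pf m(1)] m assms(1)[OF 1] by (simp add: gg_def)
  next
    case 2
    then have "t = aa n0" using m(1) assms(3) by (metis order_antisym)
    then show ?thesis using ic_eval[OF ps pf, of n0 t] 2 m gg_0[OF ps] by simp
  qed
qed

lemma agree_hi:
  fixes n0 :: nat and \<alpha> \<beta> :: "nat \<Rightarrow> bool" and t :: real
  assumes "\<And>n. n0 < n \<Longrightarrow> \<alpha> n = \<beta> n" "aa (Suc n0) \<le> t" "t \<le> 1"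
  shows "inf_concat x f \<alpha> t = inf_concat x f \<beta> t"
proof (cases "t = 1")
  case True then show ?thesis by (simp add: ic1)
next
  case False
  have t0: "0 \<le> t" using assms aa_ge0[of "Suc n0"] by linarith
  have t1: "t < 1" using assms False by linarith
  obtain m where m: "aa m \<le> t" "t < aa (Suc m)" using locate[OF t0 t1] by blast
  have "aa (Suc n0) < aa (Suc m)" using m assms by linarith
  then have "n0 < m" by (simp add: aa_less_iff)
  then show ?thesis using ic_eval[OF ps pf m(1)] m assms(1) by (simp add: gg_def)
qed

lemma mid_eq:
  assumes "t \<in> {0..1}"
  shows "inf_concat x f \<gamma> (aa n0 + (1 - aa n0)*((1/2)*t)) = gg x f \<gamma> n0 t"
proof -
  have e: "aa n0 + (1 - aa n0)*((1/2)*t) = aa n0 + (1/2)^(Suc n0) * t"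
    by (simp add: aa_compl)
  have l: "aa n0 \<le> aa n0 + (1/2)^(Suc n0) * t" using assms by simp
  have u: "aa n0 + (1/2)^(Suc n0) * t \<le> aa (Suc n0)"
  proof -
    have h: "(1/2::real)^(Suc n0) * t \<le> (1/2)^(Suc n0)" by (rule mult_left_le) (use assms in auto)
    show ?thesis using h aa_Suc_diff[of n0] by linarith
  qed
  have a: "(2::real)^(Suc n0) * (aa n0 + (1/2)^(Suc n0) * t - aa n0) = t"
    by (simp add: power_mult_distrib[symmetric] mult.assoc[symmetric] del: power_Suc)
  show ?thesis unfolding e ic_eval'[OF l u, of \<gamma>] a ..
qed

end

context icloc begin
theorem part3:
  assumes "card {n. \<alpha> n \<noteq> \<beta> n} = 1"
    and nn: "\<And>n. \<not> nulhomologous X (f n)"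
  shows "\<not> homologous X (inf_concat x f \<alpha>) (inf_concat x f \<beta>)"
proof
  assume H: "homologous X (inf_concat x f \<alpha>) (inf_concat x f \<beta>)"
  obtain n0 where n0: "{n. \<alpha> n \<noteq> \<beta> n} = {n0}" using assms(1) card_1_singletonE by blast
  have agr: "\<And>n. n \<noteq> n0 \<Longrightarrow> \<alpha> n = \<beta> n" using n0 by blast
  have diff: "\<alpha> n0 \<noteq> \<beta> n0" using n0 by blast
  define s1 where "s1 = aa n0"
  have s1: "0 \<le> s1" "s1 \<le> 1" using aa_ge0 aa_lt1 by (auto simp: s1_def less_imp_le)
  have P: "same_on01 (\<lambda>t. inf_concat x f \<alpha> (s1*t)) (\<lambda>t. inf_concat x f \<beta> (s1*t))"
    unfolding same_on01_def
  proof
    fix t :: real assume t: "t \<in> {0..1}"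
    have "s1 * t \<le> s1" using t s1 by (simp add: mult_left_le)
    then show "inf_concat x f \<alpha> (s1*t) = inf_concat x f \<beta> (s1*t)"
      using agree_lo[of n0 \<alpha> \<beta> "s1*t"] agr t s1 by (simp add: s1_def)
  qed
  have Q2: "same_on01 (\<lambda>t. inf_concat x f \<alpha> (s1 + (1-s1)*(1/2 + (1-1/2)*t))) (\<lambda>t. inf_concat x f \<beta> (s1 + (1-s1)*(1/2 + (1-1/2)*t)))"
    unfolding same_on01_def
  proof
    fix t :: real assume t: "t \<in> {0..1}"
    have e: "s1 + (1-s1)*(1/2 + (1-1/2)*t) = aa (Suc n0) + (1/2)^(Suc n0) * t"
      by (simp add: s1_def aa_compl aa_def algebra_simps)
    have "(1/2::real)^(Suc n0) * t \<le> (1/2)^(Suc n0)" using t by (simp add: mult_left_le)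
    then have "aa (Suc n0) + (1/2)^(Suc n0) * t \<le> 1" by (simp add: aa_def)
    then show "inf_concat x f \<alpha> (s1 + (1-s1)*(1/2 + (1-1/2)*t)) = inf_concat x f \<beta> (s1 + (1-s1)*(1/2 + (1-1/2)*t))"
      unfolding e using agree_hi[of n0 \<alpha> \<beta>] agr t by simp
  qed
  have Q1: "same_on01 (\<lambda>t. inf_concat x f \<gamma> (s1 + (1-s1)*((1/2)*t))) (gg x f \<gamma> n0)" for \<gamma>
    unfolding same_on01_def s1_def using mid_eq by blast
  have Da: "is_boundary1 X (\<lambda>tau. coef1 (inf_concat x f \<alpha>) tau
     - coef1 (\<lambda>t. inf_concat x f \<beta> (s1*t)) tau
     - coef1 (gg x f \<alpha> n0) tau
     - coef1 (\<lambda>t. inf_concat x f \<beta> (s1 + (1-s1)*(1/2 + (1-1/2)*t))) tau)"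
    using decomp[OF s1, of \<alpha>]
    using coef1_cong[OF P] coef1_cong[OF Q2] coef1_cong[OF Q1[of \<alpha>]] by simp
  have Db: "is_boundary1 X (\<lambda>tau. coef1 (inf_concat x f \<beta>) tau
     - coef1 (\<lambda>t. inf_concat x f \<beta> (s1*t)) tau
     - coef1 (gg x f \<beta> n0) tau
     - coef1 (\<lambda>t. inf_concat x f \<beta> (s1 + (1-s1)*(1/2 + (1-1/2)*t))) tau)"
    using decomp[OF s1, of \<beta>]
    using coef1_cong[OF Q1[of \<beta>]] by simp
  have H': "is_boundary1 X (\<lambda>tau. coef1 (inf_concat x f \<alpha>) tau - coef1 (inf_concat x f \<beta>) tau)"
    using H by (simp add: homologous_def)
  have G: "is_boundary1 X (\<lambda>tau. coef1 (gg x f \<beta> n0) tau - coef1 (gg x f \<alpha> n0) tau)"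
    using bdry_diff[OF bdry_diff[OF Da Db] H'] by (simp add: algebra_simps)
  have C: "is_boundary1 X (coef1 (\<lambda>_. x))" by (rule const_bdry[OF xX])
  show False
  proof (cases "\<alpha> n0")
    case True
    then have "\<not> \<beta> n0" using diff by auto
    with True G have "is_boundary1 X (\<lambda>tau. coef1 (\<lambda>_. x) tau - coef1 (f n0) tau)"
      by (simp add: gg_def)
    from bdry_diff[OF C this] have "is_boundary1 X (coef1 (f n0))" by simp
    then show False using nn[of n0] by (simp add: nulhomologous_def)
  next
    case False
    then have "\<beta> n0" using diff by auto
    with False G have "is_boundary1 X (\<lambda>tau. coef1 (f n0) tau - coef1 (\<lambda>_. x) tau)"
      by (simp add: gg_def)
    from bdry_add[OF this C] have "is_boundary1 X (coef1 (f n0))" by simp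
    then show False using nn[of n0] by (simp add: nulhomologous_def)
  qed
qed

end

lemma closedin_all:
  assumes "\<And>i. closedin T {p \<in> topspace T. P i p}"
  shows "closedin T {p \<in> topspace T. \<forall>i. P i p}"
proof -
  have "{p \<in> topspace T. \<forall>i. P i p} = \<Inter> (range (\<lambda>i. {p \<in> topspace T. P i p}))" by auto
  moreover have "closedin T (\<Inter> (range (\<lambda>i. {p \<in> topspace T. P i p})))"
    by (rule closedin_Inter) (use assms in auto)
  ultimately show ?thesis by simp
qed

lemma closedin_disj:
  "closedin T {p \<in> topspace T. P p} \<Longrightarrow> closedin T {p \<in> topspace T. Q p} \<Longrightarrow> closedin T {p \<in> topspace T. P p \<or> Q p}"
proof -
  assume a: "closedin T {p \<in> topspace T. P p}" "closedin T {p \<in> topspace T. Q p}"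
  have "{p \<in> topspace T. P p \<or> Q p} = {p \<in> topspace T. P p} \<union> {p \<in> topspace T. Q p}" by auto
  then show ?thesis using closedin_Un[OF a] by simp
qed

lemma closedin_conj:
  "closedin T {p \<in> topspace T. P p} \<Longrightarrow> closedin T {p \<in> topspace T. Q p} \<Longrightarrow> closedin T {p \<in> topspace T. P p \<and> Q p}"
proof -
  assume a: "closedin T {p \<in> topspace T. P p}" "closedin T {p \<in> topspace T. Q p}"
  have "{p \<in> topspace T. P p \<and> Q p} = {p \<in> topspace T. P p} \<inter> {p \<in> topspace T. Q p}" by auto
  then show ?thesis using closedin_Int[OF a] by simp
qed

lemma closedin_const: "closedin T {p \<in> topspace T. c}"
  by (cases c) auto

lemma closedin_imp_const:
  "closedin T {p \<in> topspace T. P p} \<Longrightarrow> closedin T {p \<in> topspace T. c \<longrightarrow> P p}"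
  by (cases c) auto

lemma closedin_eq_maps:
  fixes g1 g2 :: "'b \<Rightarrow> 'a::metric_space"
  shows "continuous_map T euclidean g1 \<Longrightarrow> continuous_map T euclidean g2 \<Longrightarrow> closedin T {p \<in> topspace T. g1 p = g2 p}"
  by (rule closedin_continuous_maps_eq) auto

lemma closedin_pre:
  "continuous_map T euclidean h \<Longrightarrow> closed C \<Longrightarrow> closedin T {p \<in> topspace T. h p \<in> C}"
  using closedin_continuous_map_preimage[of T euclidean h C] closed_closedin[of C] by blast

definition cY :: "((nat \<Rightarrow> bool) \<times> (nat \<Rightarrow> bool)) topology" where
  "cY = prod_topology cantor_top cantor_top"
definition cZ :: "(nat \<Rightarrow> real) topology" where
  "cZ = subtopology euclidean {z. z 0 \<in> \<nat>}"
definition cK :: "'a::metric_space set \<Rightarrow> (nat \<Rightarrow> real \<times> real \<Rightarrow> 'a) topology" where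
  "cK X = product_topology (\<lambda>_. product_topology (\<lambda>_. top_of_set X) simplex2) UNIV"
definition cT :: "'a::metric_space set \<Rightarrow> (((((nat \<Rightarrow> bool) \<times> (nat \<Rightarrow> bool)) \<times> (nat \<Rightarrow> real)) \<times> (nat \<Rightarrow> real \<times> real \<Rightarrow> 'a))) topology" where
  "cT X = prod_topology (prod_topology cY cZ) (cK X)"

lemma cont_pa: "continuous_map (cT X) cantor_top (\<lambda>p. fst (fst (fst p)))"
proof -
  have "continuous_map (cT X) (prod_topology cY cZ) fst" unfolding cT_def by (rule continuous_map_fst)
  then have "continuous_map (cT X) cY (fst \<circ> fst)" by (rule continuous_map_fst_of)
  then have "continuous_map (cT X) cantor_top (fst \<circ> (fst \<circ> fst))" unfolding cY_def by (rule continuous_map_fst_of)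
  then show ?thesis by (simp add: o_def)
qed

lemma cont_pb: "continuous_map (cT X) cantor_top (\<lambda>p. snd (fst (fst p)))"
proof -
  have "continuous_map (cT X) (prod_topology cY cZ) fst" unfolding cT_def by (rule continuous_map_fst)
  then have "continuous_map (cT X) cY (fst \<circ> fst)" by (rule continuous_map_fst_of)
  then have "continuous_map (cT X) cantor_top (snd \<circ> (fst \<circ> fst))" unfolding cY_def by (rule continuous_map_snd_of)
  then show ?thesis by (simp add: o_def)
qed

lemma cont_coord: "continuous_map (cT X) euclideanreal (\<lambda>p. snd (fst p) k)"
proof -
  have "continuous_map (cT X) (prod_topology cY cZ) fst" unfolding cT_def by (rule continuous_map_fst)
  then have "continuous_map (cT X) cZ (snd \<circ> fst)" by (rule continuous_map_snd_of)
  then have a: "continuous_map (cT X) euclidean (snd \<circ> fst)" unfolding cZ_def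
    by (rule continuous_map_into_fulltopology)
  have b: "continuous_map (euclidean :: (nat \<Rightarrow> real) topology) euclideanreal (\<lambda>z. z k)"
    using continuous_map_product_projection[of k UNIV "\<lambda>_. euclideanreal"]
    by (simp add: euclidean_product_topology)
  show ?thesis using continuous_map_compose[OF a b] by (simp add: o_def)
qed

lemma cont_w: "q \<in> simplex2 \<Longrightarrow> continuous_map (cT X) euclidean (\<lambda>p. snd p i q)"
proof -
  assume q: "q \<in> simplex2"
  have a: "continuous_map (cT X) (cK X) snd" unfolding cT_def by (rule continuous_map_snd)
  have b: "continuous_map (cK X) (product_topology (\<lambda>_. top_of_set X) simplex2) (\<lambda>w. w i)"
    unfolding cK_def by (rule continuous_map_product_projection) simp
  have c: "continuous_map (product_topology (\<lambda>_. top_of_set X) simplex2) (top_of_set X) (\<lambda>v. v q)"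
    by (rule continuous_map_product_projection[OF q])
  have "continuous_map (cT X) (top_of_set X) ((\<lambda>v. v q) \<circ> ((\<lambda>w. w i) \<circ> snd))"
    by (intro continuous_map_compose[OF continuous_map_compose[OF a b] c])
  then have "continuous_map (cT X) euclidean ((\<lambda>v. v q) \<circ> ((\<lambda>w. w i) \<circ> snd))"
    by (rule continuous_map_into_fulltopology)
  then show ?thesis by (simp add: o_def)
qed

context icloc begin

lemma cont_ic: 
  assumes t: "t \<in> {0..1}"
  shows "continuous_map cantor_top euclidean (\<lambda>\<alpha>. inf_concat x f \<alpha> t)"
proof (cases "t = 1")
  case True then show ?thesis by (simp add: ic1)
next
  case False
  then obtain n where n: "aa n \<le> t" "t < aa (Suc n)" using locate[of t] t by auto
  define s where "s = 2^(Suc n) * (t - aa n)"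
  have a: "continuous_map cantor_top (discrete_topology UNIV) (\<lambda>\<alpha>. \<alpha> n)"
    unfolding cantor_top_def by (rule continuous_map_product_projection) simp
  have b: "continuous_map (discrete_topology UNIV) euclidean (\<lambda>b. if b then f n s else x)"
    by simp
  have "continuous_map cantor_top euclidean ((\<lambda>b. if b then f n s else x) \<circ> (\<lambda>\<alpha>. \<alpha> n))"
    by (rule continuous_map_compose[OF a b])
  then show ?thesis
    by (rule continuous_map_eq) (use n in \<open>simp add: ic_eval' s_def gg_def\<close>)
qed

end

definition unitF :: "nat \<Rightarrow> (nat \<Rightarrow> real \<times> real \<Rightarrow> 'a) \<Rightarrow> (real \<Rightarrow> 'a) \<Rightarrow> (real \<Rightarrow> 'a) \<Rightarrow> nat \<Rightarrow> real \<Rightarrow> 'a" where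
  "unitF m w g h u = (if u < 3*m then (if u mod 3 = 0 then face0 (w (u div 3)) else if u mod 3 = 1 then face1 (w (u div 3)) else face2 (w (u div 3)))
      else if u = 3*m then g else h)"

definition unitW :: "int list \<Rightarrow> nat \<Rightarrow> int" where
  "unitW ks u = (if u < 3*length ks then ks!(u div 3) * (if u mod 3 = 1 then -1 else 1)
      else if u = 3*length ks then -1 else 1)"

definition NU :: "int list \<Rightarrow> nat" where "NU ks = 3*length ks + 2"

definition chainsum :: "int list \<Rightarrow> (nat \<Rightarrow> real \<times> real \<Rightarrow> 'a) \<Rightarrow> (real \<Rightarrow> 'a) \<Rightarrow> (real \<Rightarrow> 'a) \<Rightarrow> (real \<Rightarrow> 'a) \<Rightarrow> int" where
  "chainsum ks w g h tau = (\<Sum>u<NU ks. unitW ks u * coef1 (unitF (length ks) w g h u) tau)"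

definition valid :: "int list \<Rightarrow> nat list \<Rightarrow> bool" where
  "valid ks labs \<longleftrightarrow> (\<forall>l. (\<Sum>u\<in>{u. u < NU ks \<and> labs!u = l}. unitW ks u) = 0)"

definition eqs :: "int list \<Rightarrow> nat list \<Rightarrow> (nat \<Rightarrow> real \<times> real \<Rightarrow> 'a) \<Rightarrow> (real \<Rightarrow> 'a) \<Rightarrow> (real \<Rightarrow> 'a) \<Rightarrow> bool" where
  "eqs ks labs w g h \<longleftrightarrow> (\<forall>u v t. (u < NU ks \<and> v < NU ks \<and> labs!u = labs!v \<and> t \<in> {0..1}) \<longrightarrow>
      unitF (length ks) w g h u t = unitF (length ks) w g h v t)"

lemma sum3:
  fixes m :: nat and F :: "nat \<Rightarrow> 'b::comm_monoid_add"
  shows "(\<Sum>u<3*m. F u) = (\<Sum>i<m. F (3*i) + F (3*i+1) + F (3*i+2))"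
proof (induction m)
  case 0 then show ?case by simp
next
  case (Suc m)
  have eq: "3 * Suc m = Suc (Suc (Suc (3*m)))" by simp
  show ?case unfolding eq sum.lessThan_Suc using Suc by (simp add: ac_simps)
qed

lemma cs_eq: "chainsum ks w g h tau = (\<Sum>i<length ks. ks!i * bd2_coef (w i) tau) - coef1 g tau + coef1 h tau"
proof -
  let ?m = "length ks"
  let ?F = "\<lambda>u. unitW ks u * coef1 (unitF ?m w g h u) tau"
  have N: "NU ks = Suc (Suc (3 * ?m))" by (simp add: NU_def)
  have "chainsum ks w g h tau = (\<Sum>u<3*?m. ?F u) + ?F (3*?m) + ?F (Suc (3*?m))"
    unfolding chainsum_def N by simp
  also have "(\<Sum>u<3*?m. ?F u) = (\<Sum>i<?m. ?F (3*i) + ?F (3*i+1) + ?F (3*i+2))" by (rule sum3)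
  also have "\<dots> = (\<Sum>i<?m. ks!i * bd2_coef (w i) tau)"
  proof (rule sum.cong)
    fix i assume "i \<in> {..<?m}"
    then have i: "i < ?m" by simp
    have m0: "(3*i) mod 3 = 0" "(3*i) div 3 = i" by presburger+
    have m1: "(3*i+1) mod 3 = 1" "(3*i+1) div 3 = i" by presburger+
    have m2: "(3*i+2) mod 3 = 2" "(3*i+2) div 3 = i" by presburger+
    show "?F (3*i) + ?F (3*i+1) + ?F (3*i+2) = ks!i * bd2_coef (w i) tau"
      using i m0 m1 m2 by (simp add: unitW_def unitF_def bd2_coef_def algebra_simps)
  qed simp
  finally show ?thesis by (simp add: unitW_def unitF_def)
qed

lemma coef1_if: "coef1 p tau = (if same_on01 p tau then 1 else 0)"
  by (simp add: coef1_def)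

lemma same_sym: "same_on01 p q \<Longrightarrow> same_on01 q p" by (auto simp: same_on01_def)
lemma same_trans: "same_on01 p q \<Longrightarrow> same_on01 q r \<Longrightarrow> same_on01 p r" by (auto simp: same_on01_def)
lemma same_refl: "same_on01 p p" by (auto simp: same_on01_def)

lemma cs_filter: "chainsum ks w g h tau = (\<Sum>u\<in>{u. u < NU ks \<and> same_on01 (unitF (length ks) w g h u) tau}. unitW ks u)"
proof -
  have "{u. u < NU ks \<and> same_on01 (unitF (length ks) w g h u) tau} = {u \<in> {..<NU ks}. same_on01 (unitF (length ks) w g h u) tau}"
    by auto
  moreover have "chainsum ks w g h tau = (\<Sum>u\<in>{..<NU ks}. if same_on01 (unitF (length ks) w g h u) tau then unitW ks u else 0)"
    unfolding chainsum_def coef1_if by (rule sum.cong) auto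
  ultimately show ?thesis using sum.inter_filter[of "{..<NU ks}" "unitW ks" "\<lambda>u. same_on01 (unitF (length ks) w g h u) tau"] by simp
qed

lemma valid_eqs_imp:
  assumes v: "valid ks labs" and e: "eqs ks labs w g h"
  shows "chainsum ks w g h tau = 0"
proof -
  let ?F = "unitF (length ks) w g h"
  define U where "U = {u. u < NU ks \<and> same_on01 (?F u) tau}"
  have fU: "finite U" by (simp add: U_def)
  have "chainsum ks w g h tau = (\<Sum>u\<in>U. unitW ks u)" unfolding U_def by (rule cs_filter)
  also have "\<dots> = (\<Sum>l\<in>(\<lambda>u. labs!u) ` U. \<Sum>u\<in>{u. u \<in> U \<and> labs!u = l}. unitW ks u)"
    by (rule sum.group[symmetric]) (use fU in auto)
  also have "\<dots> = (\<Sum>l\<in>(\<lambda>u. labs!u) ` U. 0)"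
  proof (rule sum.cong)
    fix l assume "l \<in> (\<lambda>u. labs!u) ` U"
    then obtain v where vU: "v \<in> U" and lv: "l = labs!v" by blast
    have "{u. u \<in> U \<and> labs!u = l} = {u. u < NU ks \<and> labs!u = l}"
    proof (rule set_eqI, rule iffI)
      fix u assume "u \<in> {u. u < NU ks \<and> labs!u = l}"
      then have u: "u < NU ks" "labs!u = labs!v" using lv by auto
      have "same_on01 (?F u) (?F v)"
        using e u vU unfolding eqs_def same_on01_def U_def by blast
      then have "same_on01 (?F u) tau" using vU same_trans unfolding U_def by blast
      then show "u \<in> {u. u \<in> U \<and> labs!u = l}" using u lv U_def by auto
    qed (auto simp: U_def)
    then show "(\<Sum>u\<in>{u. u \<in> U \<and> labs!u = l}. unitW ks u) = 0"
      using v unfolding valid_def by simp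
  qed simp
  finally show ?thesis by simp
qed

definition labf :: "nat \<Rightarrow> (nat \<Rightarrow> real \<times> real \<Rightarrow> 'a) \<Rightarrow> (real \<Rightarrow> 'a) \<Rightarrow> (real \<Rightarrow> 'a) \<Rightarrow> nat \<Rightarrow> nat" where
  "labf m w g h u = (LEAST v. same_on01 (unitF m w g h v) (unitF m w g h u))"

lemma labf_same: "same_on01 (unitF m w g h (labf m w g h u)) (unitF m w g h u)"
  unfolding labf_def by (rule LeastI[of _ u]) (rule same_refl)

lemma labf_eq_iff: "labf m w g h u = labf m w g h v \<longleftrightarrow> same_on01 (unitF m w g h u) (unitF m w g h v)"
proof
  assume "labf m w g h u = labf m w g h v"
  then show "same_on01 (unitF m w g h u) (unitF m w g h v)"
    by (metis labf_same same_sym same_trans)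
next
  assume a: "same_on01 (unitF m w g h u) (unitF m w g h v)"
  have "(\<lambda>z. same_on01 (unitF m w g h z) (unitF m w g h u)) = (\<lambda>z. same_on01 (unitF m w g h z) (unitF m w g h v))"
    using a by (metis same_sym same_trans)
  then show "labf m w g h u = labf m w g h v" unfolding labf_def by simp
qed

lemma zero_imp_valid_eqs:
  fixes w :: "nat \<Rightarrow> real \<times> real \<Rightarrow> 'a" and g h :: "real \<Rightarrow> 'a"
  assumes z: "\<And>tau. chainsum ks w g h tau = 0"
  defines "labs \<equiv> map (labf (length ks) w g h) [0..<NU ks]"
  shows "valid ks labs \<and> eqs ks labs w g h"
proof
  let ?F = "unitF (length ks) w g h"
  have ln: "u < NU ks \<Longrightarrow> labs!u = labf (length ks) w g h u" for u
    by (simp add: labs_def)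
  show "eqs ks labs w g h"
    unfolding eqs_def
  proof (intro allI impI)
    fix u v :: nat and t :: real assume a: "u < NU ks \<and> v < NU ks \<and> labs!u = labs!v \<and> t \<in> {0..1}"
    then have "same_on01 (?F u) (?F v)" using ln labf_eq_iff by metis
    then show "?F u t = ?F v t" using a by (auto simp: same_on01_def)
  qed
  show "valid ks labs"
    unfolding valid_def
  proof
    fix l
    show "(\<Sum>u\<in>{u. u < NU ks \<and> labs!u = l}. unitW ks u) = 0"
    proof (cases "{u. u < NU ks \<and> labs!u = l} = {}")
      case True then show ?thesis by (simp only: sum.empty)
    next
      case False
      then obtain u0 where u0: "u0 < NU ks" "labs!u0 = l" by auto
      have "{u. u < NU ks \<and> labs!u = l} = {u. u < NU ks \<and> same_on01 (?F u) (?F u0)}"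
        using u0 ln labf_eq_iff[of "length ks" w g h] by auto
      then show ?thesis using cs_filter[of ks w g h "?F u0"] z by simp
    qed
  qed
qed


lemma closedin_imp_const':
  "(c \<Longrightarrow> closedin T {p \<in> topspace T. P p}) \<Longrightarrow> closedin T {p \<in> topspace T. c \<longrightarrow> P p}"
  by (cases c) auto

lemma simplex2_pts:
  assumes "t \<in> {0..1}"
  shows "(1-t, t) \<in> simplex2" "(0, t) \<in> simplex2" "(t, 0) \<in> simplex2"
  using assms by (auto simp: simplex2_def)

definition modz :: "(nat \<Rightarrow> real) \<Rightarrow> (nat \<Rightarrow> real \<times> real \<Rightarrow> 'a::metric_space) \<Rightarrow> bool" where
  "modz z w \<longleftrightarrow> (\<forall>i k q r. q \<in> simplex2 \<longrightarrow> r \<in> simplex2 \<longrightarrow>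
      (1 \<le> dist q r * (z (Suc k) + 1) \<or> dist (w i q) (w i r) \<le> 1 / (real k + 1)))"

lemma closedin_coord:
  "closed C \<Longrightarrow> closedin (cT X) {p \<in> topspace (cT X). snd (fst p) k \<in> C}"
  by (rule closedin_pre[OF cont_coord])

lemma closedin_wdist:
  assumes "q \<in> simplex2" "r \<in> simplex2"
  shows "closedin (cT X) {p \<in> topspace (cT X). dist (snd p i q) (snd p i r) \<le> c}"
proof -
  have "continuous_map (cT X) (prod_topology euclidean euclidean) (\<lambda>p. (snd p i q, snd p i r))"
    by (intro continuous_map_pairedI cont_w assms)
  then have cm: "continuous_map (cT X) euclidean (\<lambda>p. (snd p i q, snd p i r))" by simp
  have cl: "closed {y :: 'a \<times> 'a. dist (fst y) (snd y) \<le> c}"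
    by (rule closed_Collect_le) (auto intro!: continuous_intros)
  show ?thesis using closedin_pre[OF cm cl] by simp
qed

lemma closedin_modz: "closedin (cT X) {p \<in> topspace (cT X). modz (snd (fst p)) (snd p)}"
  unfolding modz_def
proof (intro closedin_all closedin_imp_const' closedin_disj)
  fix i k and q r :: "real \<times> real"
  assume q: "q \<in> simplex2" and r: "r \<in> simplex2"
  have "closedin (cT X) {p \<in> topspace (cT X). snd (fst p) (Suc k) \<in> {s. 1 \<le> dist q r * (s + 1)}}"
    by (rule closedin_coord) (rule closed_Collect_le; auto intro!: continuous_intros)
  then show "closedin (cT X) {p \<in> topspace (cT X). 1 \<le> dist q r * (snd (fst p) (Suc k) + 1)}" by simp
  show "closedin (cT X) {p \<in> topspace (cT X). dist (snd p i q) (snd p i r) \<le> 1 / (real k + 1)}"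
    by (rule closedin_wdist[OF q r])
qed

context icloc begin

lemma cont_unit:
  assumes t: "t \<in> {0..1}"
  shows "continuous_map (cT X) euclidean
    (\<lambda>p. unitF m (snd p) (inf_concat x f (fst (fst (fst p)))) (inf_concat x f (snd (fst (fst p)))) u t)"
proof -
  have ca: "continuous_map (cT X) euclidean (\<lambda>p. inf_concat x f (fst (fst (fst p))) t)"
    using continuous_map_compose[OF cont_pa cont_ic[OF t]] by (simp add: o_def)
  have cb: "continuous_map (cT X) euclidean (\<lambda>p. inf_concat x f (snd (fst (fst p))) t)"
    using continuous_map_compose[OF cont_pb cont_ic[OF t]] by (simp add: o_def)
  consider "u < 3*m" "u mod 3 = 0" | "u < 3*m" "u mod 3 = 1" | "u < 3*m" "u mod 3 \<noteq> 0" "u mod 3 \<noteq> 1"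
    | "\<not> u < 3*m" "u = 3*m" | "\<not> u < 3*m" "u \<noteq> 3*m" by blast
  then show ?thesis
  proof cases
    case 1 then show ?thesis using cont_w[OF simplex2_pts(1)[OF t], of X "u div 3"]
      by (simp add: unitF_def face0_def)
  next
    case 2 then show ?thesis using cont_w[OF simplex2_pts(2)[OF t], of X "u div 3"]
      by (simp add: unitF_def face1_def)
  next
    case 3 then show ?thesis using cont_w[OF simplex2_pts(3)[OF t], of X "u div 3"]
      by (simp add: unitF_def face2_def)
  next
    case 4 then show ?thesis using ca by (simp add: unitF_def)
  next
    case 5 then show ?thesis using cb by (simp add: unitF_def)
  qed
qed

definition Fset where
  "Fset = {p \<in> topspace (cT X). modz (snd (fst p)) (snd p) \<and>
     (\<forall>n::nat. 1/2 \<le> \<bar>snd (fst p) 0 - real n\<bar> \<or>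
        (valid (fst (from_nat n :: int list \<times> nat list)) (snd (from_nat n :: int list \<times> nat list)) \<and>
         eqs (fst (from_nat n :: int list \<times> nat list)) (snd (from_nat n :: int list \<times> nat list)) (snd p)
            (inf_concat x f (fst (fst (fst p)))) (inf_concat x f (snd (fst (fst p))))))}"

lemma closedin_Fset: "closedin (cT X) Fset"
  unfolding Fset_def
proof (intro closedin_conj closedin_modz closedin_all closedin_disj)
  fix n :: nat
  have "closedin (cT X) {p \<in> topspace (cT X). snd (fst p) 0 \<in> {s. 1/2 \<le> \<bar>s - real n\<bar>}}"
    by (rule closedin_coord) (rule closed_Collect_le; auto intro!: continuous_intros)
  then show "closedin (cT X) {p \<in> topspace (cT X). 1/2 \<le> \<bar>snd (fst p) 0 - real n\<bar>}" by simp
  show "closedin (cT X) {p \<in> topspace (cT X). valid (fst (from_nat n :: int list \<times> nat list)) (snd (from_nat n :: int list \<times> nat list))}"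
    by (rule closedin_const)
  show "closedin (cT X) {p \<in> topspace (cT X). eqs (fst (from_nat n :: int list \<times> nat list)) (snd (from_nat n :: int list \<times> nat list)) (snd p)
            (inf_concat x f (fst (fst (fst p)))) (inf_concat x f (snd (fst (fst p))))}"
    unfolding eqs_def
  proof (intro closedin_all closedin_imp_const')
    fix u v :: nat and t :: real
    assume "u < NU (fst (from_nat n :: int list \<times> nat list)) \<and> v < NU (fst (from_nat n :: int list \<times> nat list)) \<and>
       snd (from_nat n :: int list \<times> nat list) ! u = snd (from_nat n :: int list \<times> nat list) ! v \<and> t \<in> {0..1}"
    then have t: "t \<in> {0..1}" by simp
    show "closedin (cT X) {p \<in> topspace (cT X).
      unitF (length (fst (from_nat n :: int list \<times> nat list))) (snd p) (inf_concat x f (fst (fst (fst p)))) (inf_concat x f (snd (fst (fst p)))) u t =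
      unitF (length (fst (from_nat n :: int list \<times> nat list))) (snd p) (inf_concat x f (fst (fst (fst p)))) (inf_concat x f (snd (fst (fst p)))) v t}"
      by (rule closedin_eq_maps[OF cont_unit[OF t] cont_unit[OF t]])
  qed
qed

end

lemma compact_simplex2: "compact simplex2"
proof -
  have eq: "simplex2 = {p. 0 \<le> fst p} \<inter> {p. 0 \<le> snd p} \<inter> {p::real\<times>real. fst p + snd p \<le> 1}"
    by (auto simp: simplex2_def)
  have cl: "closed simplex2" unfolding eq
    by (intro closed_Int closed_Collect_le) (auto intro!: continuous_intros)
  have "simplex2 \<subseteq> {0..1::real} \<times> {0..1::real}" by (auto simp: simplex2_def)
  moreover have "bounded ({0..1::real} \<times> {0..1::real})"
    by (intro compact_imp_bounded compact_Times) auto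
  ultimately have "bounded simplex2" using bounded_subset by blast
  then show ?thesis using cl compact_eq_bounded_closed by blast
qed

lemma modz_cont:
  assumes "modz z w"
  shows "continuous_on simplex2 (w i)"
proof (rule uniformly_continuous_imp_continuous)
  show "uniformly_continuous_on simplex2 (w i)"
    unfolding uniformly_continuous_on_def
  proof (intro allI impI)
    fix e :: real assume e: "0 < e"
    obtain k :: nat where k: "k > 0" "inverse (real k) < e" using ex_inverse_of_nat_less[OF e] by blast
    have ke: "1 / (real k + 1) < e"
    proof -
      have "1 / (real k + 1) \<le> inverse (real k)" using k by (simp add: divide_simps)
      then show ?thesis using k by linarith
    qed
    define d where "d = 1 / (\<bar>z (Suc k)\<bar> + 1)"
    have d: "d > 0" by (simp add: d_def add_pos_nonneg)
    show "\<exists>d>0. \<forall>xa\<in>simplex2. \<forall>x'\<in>simplex2. dist x' xa < d \<longrightarrow> dist (w i x') (w i xa) < e"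
    proof (intro exI[of _ d] conjI d ballI impI)
      fix q r assume q: "q \<in> simplex2" and r: "r \<in> simplex2" and qr: "dist r q < d"
      have "dist r q * (z (Suc k) + 1) \<le> dist r q * (\<bar>z (Suc k)\<bar> + 1)"
        by (intro mult_left_mono) auto
      also have "\<dots> < d * (\<bar>z (Suc k)\<bar> + 1)"
        by (intro mult_strict_right_mono qr) (simp add: add_pos_nonneg)
      also have "\<dots> = 1" by (simp add: d_def)
      finally have "\<not> 1 \<le> dist r q * (z (Suc k) + 1)" by simp
      then have "dist (w i r) (w i q) \<le> 1 / (real k + 1)"
        using assms q r unfolding modz_def by blast
      then show "dist (w i r) (w i q) < e" using ke by linarith
    qed
  qed
qed

lemma topspace_cT:
  "topspace (cT X) = ((UNIV \<times> {z. z 0 \<in> \<nat>}) \<times> {w. \<forall>i. w i \<in> simplex2 \<rightarrow>\<^sub>E X})"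
  by (auto simp: cT_def cY_def cZ_def cK_def cantor_top_def PiE_iff extensional_def)

context icloc begin

lemma Fset_sub:
  assumes p: "(((\<alpha>, \<beta>), z), w) \<in> Fset"
  shows "homologous X (inf_concat x f \<alpha>) (inf_concat x f \<beta>)"
proof -
  have ts: "z 0 \<in> \<nat>" "\<And>i. w i \<in> simplex2 \<rightarrow>\<^sub>E X" using p by (auto simp: Fset_def topspace_cT)
  have md: "modz z w" using p by (simp add: Fset_def)
  obtain n where n: "z 0 = real n" using ts(1) Nats_cases by blast
  define d where "d = (from_nat n :: int list \<times> nat list)"
  define ks where "ks = fst d"
  define m where "m = length ks"
  have "1/2 \<le> \<bar>z 0 - real n\<bar> \<or> (valid (fst d) (snd d) \<and> eqs (fst d) (snd d) w (inf_concat x f \<alpha>) (inf_concat x f \<beta>))"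
    using p unfolding Fset_def d_def by simp
  then have "valid (fst d) (snd d) \<and> eqs (fst d) (snd d) w (inf_concat x f \<alpha>) (inf_concat x f \<beta>)"
    using n by simp
  then have z: "chainsum ks w (inf_concat x f \<alpha>) (inf_concat x f \<beta>) tau = 0" for tau
    unfolding ks_def using valid_eqs_imp by blast
  define S where "S = map (\<lambda>i. (w i, ks!i)) [0..<m]"
  show ?thesis
    unfolding homologous_def is_boundary1_def
  proof (intro exI[of _ S] conjI allI ballI)
    fix tau
    have "coef1 (inf_concat x f \<alpha>) tau - coef1 (inf_concat x f \<beta>) tau = (\<Sum>i<m. ks!i * bd2_coef (w i) tau)"
      using z[of tau] cs_eq[of ks w "inf_concat x f \<alpha>" "inf_concat x f \<beta>" tau] by (simp add: m_def)
    also have "\<dots> = (\<Sum>(\<sigma>, k) \<leftarrow> S. k * bd2_coef \<sigma> tau)"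
      unfolding S_def by (simp add: sum_set_upt_conv_sum_list_nat[symmetric] o_def atLeast0LessThan)
    finally show "coef1 (inf_concat x f \<alpha>) tau - coef1 (inf_concat x f \<beta>) tau = (\<Sum>(\<sigma>, k) \<leftarrow> S. k * bd2_coef \<sigma> tau)" .
  next
    fix s assume "s \<in> set S"
    then obtain i where s: "s = (w i, ks!i)" by (auto simp: S_def)
    have "w i ` simplex2 \<subseteq> X" using ts(2)[of i] by auto
    then show "case s of (\<sigma>, k) \<Rightarrow> continuous_on simplex2 \<sigma> \<and> \<sigma> ` simplex2 \<subseteq> X"
      using s modz_cont[OF md] by simp
  qed
qed

end

context icloc begin

lemma Fset_sup:
  assumes H: "homologous X (inf_concat x f \<alpha>) (inf_concat x f \<beta>)"
  shows "\<exists>z w. (((\<alpha>, \<beta>), z), w) \<in> Fset"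
proof -
  obtain S where S1: "\<forall>(\<sigma>, k) \<in> set S. continuous_on simplex2 \<sigma> \<and> \<sigma> ` simplex2 \<subseteq> X"
     and S2: "\<And>tau. coef1 (inf_concat x f \<alpha>) tau - coef1 (inf_concat x f \<beta>) tau = (\<Sum>(\<sigma>, k) \<leftarrow> S. k * bd2_coef \<sigma> tau)"
    using H unfolding homologous_def is_boundary1_def by blast
  define m where "m = length S"
  define ks where "ks = map snd S"
  define \<sigma> where "\<sigma> i = fst (S!i)" for i
  have mk: "length ks = m" by (simp add: ks_def m_def)
  have sc: "continuous_on simplex2 (\<sigma> i)" "\<sigma> i ` simplex2 \<subseteq> X" if "i < m" for i
    using S1 nth_mem[of i S] that unfolding \<sigma>_def m_def by (auto simp: case_prod_beta)
  define w where "w i = (if i < m then restrict (\<sigma> i) simplex2 else restrict (\<lambda>_. x) simplex2)" for i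
  have bdw: "bd2_coef (w i) tau = bd2_coef (\<sigma> i) tau" if "i < m" for i tau
  proof -
    have "same_on01 (face0 (w i)) (face0 (\<sigma> i))" "same_on01 (face1 (w i)) (face1 (\<sigma> i))" "same_on01 (face2 (w i)) (face2 (\<sigma> i))"
      using that simplex2_pts by (auto simp: same_on01_def w_def face0_def face1_def face2_def)
    then show ?thesis by (simp add: bd2_coef_def coef1_cong)
  qed
  have cs0: "chainsum ks w (inf_concat x f \<alpha>) (inf_concat x f \<beta>) tau = 0" for tau
  proof -
    have "(\<Sum>(\<sigma>, k) \<leftarrow> S. k * bd2_coef \<sigma> tau) = (\<Sum>i<m. ks!i * bd2_coef (\<sigma> i) tau)"
      unfolding m_def ks_def \<sigma>_def
      by (simp add: sum_list_sum_nth atLeast0LessThan case_prod_beta)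
    also have "\<dots> = (\<Sum>i<m. ks!i * bd2_coef (w i) tau)" using bdw by simp
    finally show ?thesis using S2[of tau] cs_eq[of ks w "inf_concat x f \<alpha>" "inf_concat x f \<beta>" tau] mk by simp
  qed
  define labs where "labs = map (labf (length ks) w (inf_concat x f \<alpha>) (inf_concat x f \<beta>)) [0..<NU ks]"
  have ve: "valid ks labs \<and> eqs ks labs w (inf_concat x f \<alpha>) (inf_concat x f \<beta>)"
    unfolding labs_def by (rule zero_imp_valid_eqs[OF cs0])
  define d where "d = (ks, labs)"
  have "\<forall>i<m. \<forall>k::nat. \<exists>\<delta>>0. \<forall>q\<in>simplex2. \<forall>r\<in>simplex2. dist r q < \<delta> \<longrightarrow> dist (\<sigma> i r) (\<sigma> i q) < 1 / (real k + 1)"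
  proof (intro allI impI)
    fix i k assume "i < m"
    then have "uniformly_continuous_on simplex2 (\<sigma> i)" using sc compact_uniformly_continuous compact_simplex2 by blast
    then show "\<exists>\<delta>>0. \<forall>q\<in>simplex2. \<forall>r\<in>simplex2. dist r q < \<delta> \<longrightarrow> dist (\<sigma> i r) (\<sigma> i q) < 1 / (real k + 1)"
      unfolding uniformly_continuous_on_def by (simp add: add_pos_nonneg)
  qed
  then obtain \<delta> where \<delta>: "\<And>i k. i < m \<Longrightarrow> \<delta> i k > 0 \<and> (\<forall>q\<in>simplex2. \<forall>r\<in>simplex2. dist r q < \<delta> i k \<longrightarrow> dist (\<sigma> i r) (\<sigma> i q) < 1 / (real k + 1))"
    by metis
  define z where "z j = (if j = 0 then real (to_nat d) else (\<Sum>i<m. 1 / \<delta> i (j - 1)))" for j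
  have zge: "1 / \<delta> i k \<le> z (Suc k)" if "i < m" for i k
  proof -
    have "\<And>j. j \<in> {..<m} - {i} \<Longrightarrow> 0 \<le> 1 / \<delta> j k" using \<delta> by (simp add: less_imp_le)
    then have "1 / \<delta> i k \<le> (\<Sum>j<m. 1 / \<delta> j k)"
      by (intro member_le_sum) (use that in auto)
    then show ?thesis unfolding z_def by simp
  qed
  have md: "modz z w"
    unfolding modz_def
  proof (intro allI impI)
    fix i k and q r :: "real \<times> real"
    assume q: "q \<in> simplex2" and r: "r \<in> simplex2"
    show "1 \<le> dist q r * (z (Suc k) + 1) \<or> dist (w i q) (w i r) \<le> 1 / (real k + 1)"
    proof (cases "i < m")
      case False then show ?thesis using q r by (simp add: w_def)
    next
      case True
      show ?thesis
      proof (cases "1 \<le> dist q r * (z (Suc k) + 1)")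
        case True2: True then show ?thesis by simp
      next
        case False
        then have lt: "dist q r * (z (Suc k) + 1) < 1" by simp
        have dp: "\<delta> i k > 0" using \<delta> True by blast
        have "dist q r * (1 / \<delta> i k) \<le> dist q r * (z (Suc k) + 1)"
          using zge[OF True, of k] by (intro mult_left_mono) auto
        then have "dist q r * (1 / \<delta> i k) < 1" using lt by linarith
        then have "dist q r < \<delta> i k" using dp by (simp add: field_simps)
        then have "dist (\<sigma> i q) (\<sigma> i r) < 1 / (real k + 1)"
          using \<delta>[OF True, of k] q r by (metis dist_commute)
        then show ?thesis using True q r by (simp add: w_def)
      qed
    qed
  qed
  have tsp: "(((\<alpha>, \<beta>), z), w) \<in> topspace (cT X)"
    unfolding topspace_cT using sc xX by (auto simp: z_def w_def)
  have cond: "1/2 \<le> \<bar>z 0 - real n\<bar> \<or> (valid (fst (from_nat n :: int list \<times> nat list)) (snd (from_nat n :: int list \<times> nat list)) \<and>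
         eqs (fst (from_nat n :: int list \<times> nat list)) (snd (from_nat n :: int list \<times> nat list)) w
            (inf_concat x f \<alpha>) (inf_concat x f \<beta>))" for n
  proof (cases "n = to_nat d")
    case True then show ?thesis using ve by (simp add: d_def)
  next
    case False
    then have "1 \<le> \<bar>real (to_nat d) - real n\<bar>" by (simp add: of_nat_diff_real)
    then show ?thesis by (simp add: z_def)
  qed
  show ?thesis
    by (intro exI[of _ z] exI[of _ w]) (use tsp md cond in \<open>simp add: Fset_def\<close>)
qed

lemma REL_eq: "{(\<alpha>, \<beta>). homologous X (inf_concat x f \<alpha>) (inf_concat x f \<beta>)} = fst ` (fst ` Fset)"
proof
  show "{(\<alpha>, \<beta>). homologous X (inf_concat x f \<alpha>) (inf_concat x f \<beta>)} \<subseteq> fst ` fst ` Fset"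
  proof
    fix ab assume "ab \<in> {(\<alpha>, \<beta>). homologous X (inf_concat x f \<alpha>) (inf_concat x f \<beta>)}"
    then obtain \<alpha> \<beta> where ab: "ab = (\<alpha>, \<beta>)" "homologous X (inf_concat x f \<alpha>) (inf_concat x f \<beta>)" by blast
    then obtain z w where "(((\<alpha>, \<beta>), z), w) \<in> Fset" using Fset_sup by blast
    then show "ab \<in> fst ` fst ` Fset" using ab by (metis fst_conv image_eqI)
  qed
  show "fst ` fst ` Fset \<subseteq> {(\<alpha>, \<beta>). homologous X (inf_concat x f \<alpha>) (inf_concat x f \<beta>)}"
    using Fset_sub by force
qed

end

lemma second_countable_euclidean: "second_countable (euclidean :: 'a::second_countable_topology topology)"
proof -
  obtain \<B> :: "'a set set" where B: "countable \<B>" "\<And>C. C \<in> \<B> \<Longrightarrow> open C"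
       "\<And>S. open S \<Longrightarrow> \<exists>U. U \<subseteq> \<B> \<and> S = \<Union>U"
    using univ_second_countable by blast
  show ?thesis
    unfolding second_countable_def
  proof (intro exI[of _ \<B>] conjI ballI allI impI)
    show "countable \<B>" by (rule B(1))
    fix V :: "'a set" assume "V \<in> \<B>" then show "openin euclidean V" using B(2) by simp
  next
    fix U :: "'a set" and x :: 'a assume "openin euclidean U \<and> x \<in> U"
    then obtain \<U> where "\<U> \<subseteq> \<B>" "U = \<Union>\<U>" "x \<in> U" using B(3) by auto
    then show "\<exists>V\<in>\<B>. x \<in> V \<and> V \<subseteq> U" by blast
  qed
qed

lemma Polish_cZ: "Polish_space cZ"
proof -
  have cl: "closed {z :: nat \<Rightarrow> real. z 0 \<in> \<nat>}"
  proof -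
    have "{z :: nat \<Rightarrow> real. z 0 \<in> \<nat>} = (\<lambda>z. z 0) -` \<nat>" by (simp add: vimage_def)
    moreover have "closed ((\<lambda>z::nat\<Rightarrow>real. z 0) -` \<nat>)"
      by (rule closed_vimage) (rule closed_Nats, rule continuous_on_product_coordinates)
    ultimately show ?thesis by simp
  qed
  have "completely_metrizable_space cZ"
    unfolding cZ_def
    by (rule completely_metrizable_space_closedin[OF completely_metrizable_space_euclidean])
       (use cl closed_closedin in blast)
  moreover have "separable_space cZ"
    unfolding cZ_def
    by (rule second_countable_imp_separable_space[OF second_countable_subtopology[OF second_countable_euclidean]])
  ultimately show ?thesis by (simp add: Polish_space_def)
qed

lemma compact_cK: "compact X \<Longrightarrow> compact_space (cK X)"
proof -
  assume X: "compact X"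
  have a: "compact_space (top_of_set X)" by (rule compact_space_subtopology) (simp add: X)
  have b: "compact_space (product_topology (\<lambda>_::real\<times>real. top_of_set X) simplex2)"
    unfolding compact_space_product_topology using a by blast
  show ?thesis
    unfolding cK_def using compact_space_product_topology[of "\<lambda>_::nat. product_topology (\<lambda>_. top_of_set X) simplex2" UNIV] b by blast
qed

context icloc begin

theorem part1:
  assumes "compact X"
  shows "analytic_in (prod_topology cantor_top cantor_top)
           {(\<alpha>, \<beta>). homologous X (inf_concat x f \<alpha>) (inf_concat x f \<beta>)}"
  unfolding analytic_in_def
proof (intro exI[of _ cZ] exI[of _ "fst ` Fset"] conjI)
  show "Polish_space cZ" by (rule Polish_cZ)
  have "closed_map (prod_topology (prod_topology cY cZ) (cK X)) (prod_topology cY cZ) fst"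
    by (rule closed_map_fst[OF compact_cK[OF assms]])
  then have "closedin (prod_topology cY cZ) (fst ` Fset)"
    using closedin_Fset unfolding closed_map_def cT_def by blast
  then show "closedin (prod_topology (prod_topology cantor_top cantor_top) cZ) (fst ` Fset)"
    by (simp add: cY_def)
  show "{(\<alpha>, \<beta>). homologous X (inf_concat x f \<alpha>) (inf_concat x f \<beta>)} = fst ` fst ` Fset"
    by (rule REL_eq)
qed

end

theorem lemma2p3:
  fixes X :: "'a::metric_space set" and x :: 'a and f :: "nat \<Rightarrow> real \<Rightarrow> 'a"
  assumes "compact X" and "connected X" and "locally connected X"
    and "x \<in> X"
    and "\<And>n. path (f n)" and "\<And>n. path_image (f n) \<subseteq> X"
    and "\<And>n. pathstart (f n) = x" and "\<And>n. pathfinish (f n) = x"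
    and "\<And>n. diameter (path_image (f n)) \<le> (1/2)^n"
    and "\<And>n. \<not> nulhomologous X (f n)"
  shows "analytic_in (prod_topology cantor_top cantor_top)
           {(\<alpha>, \<beta>). homologous X (inf_concat x f \<alpha>) (inf_concat x f \<beta>)}
       \<and> equiv UNIV {(\<alpha>, \<beta>). homologous X (inf_concat x f \<alpha>) (inf_concat x f \<beta>)}
       \<and> (\<forall>\<alpha> \<beta>. card {n. \<alpha> n \<noteq> \<beta> n} = 1 \<longrightarrow>
             \<not> homologous X (inf_concat x f \<alpha>) (inf_concat x f \<beta>))"
proof -
  interpret icloc X x f
    by unfold_locales (use assms in auto)
  have p1: "analytic_in (prod_topology cantor_top cantor_top)
           {(\<alpha>, \<beta>). homologous X (inf_concat x f \<alpha>) (inf_concat x f \<beta>)}"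
    by (rule part1[OF assms(1)])
  have p2: "equiv UNIV {(\<alpha>, \<beta>). homologous X (inf_concat x f \<alpha>) (inf_concat x f \<beta>)}"
    by (rule equiv_part)
  have p3: "\<forall>\<alpha> \<beta>. card {n. \<alpha> n \<noteq> \<beta> n} = 1 \<longrightarrow>
             \<not> homologous X (inf_concat x f \<alpha>) (inf_concat x f \<beta>)"
    using part3 assms(10) by blast
  show ?thesis using p1 p2 p3 by blast
qed

end
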